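(* Let $I\subset(0,\infty)$ be an interval and let $f:I\to\mathbb{R}$ be differentiable on the interior $I^\circ$ of $I$. Let $m\in(0,1]$, $\alpha\in[0,1]$, $q\ge 1$ and $\theta>0$, and let $a,b$ be real numbers with $a<b$ and $a,\,b/m\in I^\circ$, such that $f'\in L[a,b]$. Suppose that $|f'|^q$ is harmonically $(\alpha,m)$-convex on $[a,b/m]$. Then $$\left|I_f(g;\theta,a,b)\right|\le \frac{ab(b-a)}{2}\,C_1(\theta;a,b)^{1-1/q}\left[C_2(\theta;\alpha;a,b)\,|f'(a)|^q+m\,C_3(\theta;\alpha;a,b)\,|f'(b/m)|^q\right]^{1/q},$$ where $$C_1(\theta;a,b)=\frac{b^{-2}}{\theta+1}\left[{}_2F_1\!\left(2,\theta+1;\theta+2;1-\tfrac{a}{b}\right)+{}_2F_1\!\left(2,1;\theta+2;1-\tfrac{a}{b}\right)\right],$$ $$C_2(\theta;\alpha;a,b)=\frac{\beta(\theta+1,\alpha+1)}{b^{2}}\,{}_2F_1\!\left(2,\theta+1;\theta+\alpha+2;1-\tfrac{a}{b}\right)+\frac{b^{-2}}{\theta+\alpha+1}\,{}_2F_1\!\left(2,1;\theta+\alpha+2;1-\tfrac{a}{b}\right),$$ $$C_3(\theta;\alpha;a,b)=C_1(\theta;a,b)-C_2(\theta;\alpha;a,b).$$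
   Context: A function $h:J\to\mathbb{R}$ on an interval $J\subset(0,\infty)$ is called harmonically $(\alpha,m)$-convex (with $\alpha\in[0,1]$, $m\in(0,1]$) if $h\left(\frac{mxy}{mty+(1-t)x}\right)\le t^{\alpha}h(x)+m(1-t^{\alpha})h(y)$ for all $x,y\in J$ and $t\in[0,1]$ (for which the left-hand side is defined, i.e. the argument lies in $J$). For $\varphi\in L[c,d]$ and $\theta>0$ the Riemann–Liouville integrals are $J^{\theta}_{c+}\varphi(x)=\frac{1}{\Gamma(\theta)}\int_c^x (x-t)^{\theta-1}\varphi(t)\,dt$ for $x>c$ and $J^{\theta}_{d-}\varphi(x)=\frac{1}{\Gamma(\theta)}\int_x^d (t-x)^{\theta-1}\varphi(t)\,dt$ for $x<d$, where $\Gamma$ is the Euler Gamma function. With $g(x)=1/x$, define $$I_f(g;\theta,a,b)=\frac{f(a)+f(b)}{2}-\frac{\Gamma(\theta+1)}{2}\left(\frac{ab}{b-a}\right)^{\theta}\left\{J^{\theta}_{1/a-}(f\circ g)(1/b)+J^{\theta}_{1/b+}(f\circ g)(1/a)\right\}.$$ $\beta(x,y)=\int_0^1 t^{x-1}(1-t)^{y-1}dt$ ($x,y>0$) is the Beta function, and the hypergeometric function is ${}_2F_1(a,b;c;z)=\frac{1}{\beta(b,c-b)}\int_0^1 t^{b-1}(1-t)^{c-b-1}(1-zt)^{-a}dt$ for $c>b>0$, $|z|<1$. *)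

theory Defs
  imports "HOL-Analysis.Analysis"
begin

definition rpow :: "real \<Rightarrow> real \<Rightarrow> real" where
  "rpow t a = (if t = 0 then (if a = 0 then 1 else 0) else t powr a)"

definition harm_alpha_m_convex_on :: "real set \<Rightarrow> real \<Rightarrow> real \<Rightarrow> (real \<Rightarrow> real) \<Rightarrow> bool" where
  "harm_alpha_m_convex_on J \<alpha> m h \<longleftrightarrow>
     (\<forall>x\<in>J. \<forall>y\<in>J. \<forall>t\<in>{0..1}.
        m * x * y / (m * t * y + (1 - t) * x) \<in> J \<longrightarrow>
        h (m * x * y / (m * t * y + (1 - t) * x))
          \<le> rpow t \<alpha> * h x + m * (1 - rpow t \<alpha>) * h y)"

definition RL_left :: "real \<Rightarrow> real \<Rightarrow> (real \<Rightarrow> real) \<Rightarrow> real \<Rightarrow> real" where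
  "RL_left \<theta> c \<phi> x = integral {c..x} (\<lambda>t. (x - t) powr (\<theta> - 1) * \<phi> t) / Gamma \<theta>"

definition RL_right :: "real \<Rightarrow> real \<Rightarrow> (real \<Rightarrow> real) \<Rightarrow> real \<Rightarrow> real" where
  "RL_right \<theta> d \<phi> x = integral {x..d} (\<lambda>t. (t - x) powr (\<theta> - 1) * \<phi> t) / Gamma \<theta>"

text \<open>Beta function and Gauss hypergeometric function (Euler integral representation).\<close>
definition beta_fn :: "real \<Rightarrow> real \<Rightarrow> real" where
  "beta_fn x y = integral {0..1} (\<lambda>t. t powr (x - 1) * (1 - t) powr (y - 1))"

definition hyp2F1 :: "real \<Rightarrow> real \<Rightarrow> real \<Rightarrow> real \<Rightarrow> real" where
  "hyp2F1 a b c z = integral {0..1} (\<lambda>t. t powr (b - 1) * (1 - t) powr (c - b - 1) * (1 - z * t) powr (- a))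
                     / beta_fn b (c - b)"

definition I_f :: "(real \<Rightarrow> real) \<Rightarrow> real \<Rightarrow> real \<Rightarrow> real \<Rightarrow> real" where
  "I_f f \<theta> a b = (f a + f b) / 2
     - Gamma (\<theta> + 1) / 2 * (a * b / (b - a)) powr \<theta>
       * (RL_right \<theta> (1/a) (\<lambda>x. f (1/x)) (1/b) + RL_left \<theta> (1/b) (\<lambda>x. f (1/x)) (1/a))"

definition C1 :: "real \<Rightarrow> real \<Rightarrow> real \<Rightarrow> real" where
  "C1 \<theta> a b = b powr (-2) / (\<theta> + 1) *
     (hyp2F1 2 (\<theta> + 1) (\<theta> + 2) (1 - a/b) + hyp2F1 2 1 (\<theta> + 2) (1 - a/b))"

definition C2 :: "real \<Rightarrow> real \<Rightarrow> real \<Rightarrow> real \<Rightarrow> real" where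
  "C2 \<theta> \<alpha> a b = beta_fn (\<theta> + 1) (\<alpha> + 1) / b^2 * hyp2F1 2 (\<theta> + 1) (\<theta> + \<alpha> + 2) (1 - a/b)
     + b powr (-2) / (\<theta> + \<alpha> + 1) * hyp2F1 2 1 (\<theta> + \<alpha> + 2) (1 - a/b)"

definition C3 :: "real \<Rightarrow> real \<Rightarrow> real \<Rightarrow> real \<Rightarrow> real" where
  "C3 \<theta> \<alpha> a b = C1 \<theta> a b - C2 \<theta> \<alpha> a b"

end

theory Submission
  imports Defs
begin

lemma young_pt:
  fixes y c q :: real
  assumes "0 \<le> y" "0 < c" "1 \<le> q"
  shows "y \<le> (1 - 1/q) * c + (1/q) * c powr (1 - q) * y powr q"
proof (cases "y = 0")
  case True
  have "1/q \<le> 1" using assms by simp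
  thus ?thesis using True assms by simp
next
  case False
  define X where "X = c powr (1-q) * y powr q"
  have X: "X > 0" using assms False by (simp add: X_def)
  have q1: "1/q \<le> 1" using assms by simp
  have "X powr (1/q) * c powr (1 - 1/q) \<le> (1/q) * X + (1 - 1/q) * c"
    by (rule Youngs_inequality_0) (use assms X q1 in auto)
  moreover have "X powr (1/q) * c powr (1 - 1/q) = y"
  proof -
    have "X powr (1/q) = c powr ((1-q)/q) * y" using assms False
      by (simp add: X_def powr_mult powr_powr)
    then have "X powr (1/q) * c powr (1 - 1/q) = c powr ((1-q)/q + (1 - 1/q)) * y"
      by (simp add: powr_add)
    also have "(1-q)/q + (1 - 1/q) = 0" using assms by (simp add: field_simps)
    finally show ?thesis using assms by simp
  qed
  ultimately show ?thesis by (simp add: X_def algebra_simps)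
qed

lemma final_alg:
  fixes K W M Y q :: real
  assumes "K > 0" "W > 0" "M \<ge> 0" "q \<ge> 1"
   and H: "\<And>c. c > 0 \<Longrightarrow> Y \<le> K * ((1 - 1/q) * c * W + (1/q) * c powr (1 - q) * M)"
  shows "Y \<le> K * (W powr (1 - 1/q) * M powr (1/q))"
proof (cases "M = 0")
  case True
  show ?thesis
  proof (rule ccontr)
    assume "\<not> ?thesis"
    then have Y: "Y > 0" using True assms by simp
    define c where "c = Y / (2 * (K * W + 1))"
    have KW: "K * W > 0" using assms by simp
    have c: "c > 0" unfolding c_def using Y KW by (intro divide_pos_pos) auto
    have "Y \<le> K * ((1 - 1/q) * c * W)" using H[OF c] True by simp
    also have "\<dots> \<le> K * (c * W)"
      using assms c by (intro mult_left_mono) (auto simp: mult_le_cancel_right)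
    also have "\<dots> = Y * (K * W / (2 * (K * W + 1)))" by (simp add: c_def)
    also have "\<dots> < Y * 1"
    proof (rule mult_strict_left_mono)
      show "K * W / (2 * (K * W + 1)) < 1" using KW by (simp add: field_simps)
    qed (use Y in auto)
    finally show False by simp
  qed
next
  case False
  then have M: "M > 0" using assms by simp
  define c where "c = (M/W) powr (1/q)"
  have c: "c > 0" using M assms by (simp add: c_def)
  have cE: "c = exp ((ln M - ln W) / q)"
    using M assms by (simp add: c_def powr_def ln_div)
  have R: "W powr (1 - 1/q) * M powr (1/q) = exp ((1 - 1/q) * ln W + ln M / q)"
    using M assms by (simp add: powr_def exp_add)
  have e1: "c * W = W powr (1 - 1/q) * M powr (1/q)"
  proof -
    have "c * W = exp ((ln M - ln W) / q + ln W)" using assms by (simp add: cE exp_add)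
    also have "(ln M - ln W) / q + ln W = (1 - 1/q) * ln W + ln M / q"
      using assms by (simp add: field_simps)
    finally show ?thesis using R by simp
  qed
  have e2: "c powr (1 - q) * M = W powr (1 - 1/q) * M powr (1/q)"
  proof -
    have "c powr (1 - q) * M = exp ((1 - q) * ((ln M - ln W) / q) + ln M)"
      using M c by (simp add: powr_def cE exp_add)
    also have "(1 - q) * ((ln M - ln W) / q) + ln M = (1 - 1/q) * ln W + ln M / q"
      using assms by (simp add: field_simps)
    finally show ?thesis using R by simp
  qed
  show ?thesis using H[OF c] e1 e2 by (simp add: algebra_simps)
qed

lemma rpow_pos_eq: "0 < a \<Longrightarrow> rpow t a = t powr a"
  by (simp add: rpow_def)

lemma rpow_0_right[simp]: "rpow t 0 = 1"
  by (simp add: rpow_def)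

lemma rpow_open: "t \<noteq> 0 \<Longrightarrow> rpow t a = t powr a"
  by (simp add: rpow_def)

lemma cont_rpow:
  assumes "0 \<le> al" "continuous_on S g" "\<And>x. x \<in> S \<Longrightarrow> g x \<ge> 0"
  shows "continuous_on S (\<lambda>x. rpow (g x) al)"
proof (cases "al = 0")
  case True thus ?thesis by simp
next
  case False
  then have "al > 0" using assms by simp
  then have "continuous_on S (\<lambda>x. g x powr al)"
    using assms by (intro continuous_on_powr') auto
  thus ?thesis using \<open>al > 0\<close> by (simp add: rpow_pos_eq)
qed

lemma rpow_nonneg: "rpow t al \<ge> 0"
  by (simp add: rpow_def)

lemma rpow_le1: "0 \<le> t \<Longrightarrow> t \<le> 1 \<Longrightarrow> 0 \<le> al \<Longrightarrow> rpow t al \<le> 1"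
  by (auto simp: rpow_def powr_le_one_le intro: powr_le1)

lemma denom_pos: fixes a b t :: real shows "0 < a \<Longrightarrow> a < b \<Longrightarrow> t \<in> {0..1} \<Longrightarrow> b - (b-a)*t \<ge> a"
proof -
  assume "0 < a" "a < b" "t \<in> {0..1}"
  then have "(b-a)*t \<le> (b-a)*1" by (intro mult_left_mono) simp_all
  thus ?thesis by simp
qed

lemma hyp_int:
  fixes a b P Q :: real
  assumes "0 < a" "a < b" "0 \<le> P" "0 \<le> Q"
  shows "integral {0..1} (\<lambda>t. t powr P * (1-t) powr Q * (1 - (1 - a/b) * t) powr (-2))
       = b^2 * integral {0..1} (\<lambda>t. rpow t P * rpow (1-t) Q / (b - (b-a)*t)^2)"
proof -
  let ?g = "\<lambda>t. rpow t P * rpow (1-t) Q / (b - (b-a)*t)^2"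
  have pos: "b - (b-a)*t > 0" if "t \<in> {0..1}" for t
    using denom_pos[OF assms(1,2) that] assms by simp
  have cont: "continuous_on {0..1} ?g"
    by (intro continuous_intros cont_rpow) (use assms pos in force)+
  have "((\<lambda>t. b^2 * ?g t) has_integral b^2 * integral {0..1} ?g) {0..1}"
    by (intro has_integral_mult_right integrable_integral integrable_continuous_interval cont)
  then have "((\<lambda>t. t powr P * (1-t) powr Q * (1 - (1 - a/b) * t) powr (-2))
       has_integral b^2 * integral {0..1} ?g) {0..1}"
  proof (rule has_integral_spike_finite[where S="{0,1}", rotated 2])
    fix t :: real assume t: "t \<in> {0..1} - {0,1}"
    then have t01: "0<t" "t<1" by auto
    have eq: "1 - (1-a/b)*t = (b - (b-a)*t)/b" using assms by (simp add: field_simps)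
    have p: "b - (b-a)*t > 0" using pos t by auto
    show "t powr P * (1-t) powr Q * (1 - (1 - a/b) * t) powr (-2) = b^2 * ?g t"
      using t01 p assms by (simp add: rpow_open eq powr_minus powr_divide field_simps)
  qed simp
  thus ?thesis by (rule integral_unique)
qed

lemma beta_fn_Beta: "0 < x \<Longrightarrow> 0 < y \<Longrightarrow> beta_fn x y = Beta x y"
  unfolding beta_fn_def by (rule integral_unique, rule has_integral_Beta_real) auto

lemma Beta_pos_real: "0 < x \<Longrightarrow> 0 < (y::real) \<Longrightarrow> Beta x y > 0"
  by (simp add: Beta_def)

lemma Beta_1_left: "0 < (y::real) \<Longrightarrow> Beta 1 y = 1/y"
proof -
  assume y: "0 < y"
  have "Gamma (1 + y) = y * Gamma y" using Gamma_plus1[of y] y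
    by (simp add: add.commute nonpos_Ints_def)
  moreover have g: "Gamma y \<noteq> 0" using y Gamma_real_pos[of y] by linarith
  ultimately show ?thesis using y g by (simp add: Beta_def)
qed

lemma Beta_1_right: "0 < (y::real) \<Longrightarrow> Beta y 1 = 1/y"
  using Beta_1_left Beta_commute by metis

definition wgt :: "real \<Rightarrow> real \<Rightarrow> real \<Rightarrow> real \<Rightarrow> real" where
  "wgt \<theta> a b s = (s powr \<theta> + (1-s) powr \<theta>) / (b - (b-a) * s)^2"

lemma cont_Bfun:
  fixes a b P Q :: real
  assumes "0 < a" "a < b" "0 \<le> P" "0 \<le> Q"
  shows "continuous_on {0..1} (\<lambda>t. rpow t P * rpow (1-t) Q / (b - (b-a)*t)^2)"
proof -
  have pos: "b - (b-a)*t > 0" if "t \<in> {0..1}" for t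
    using denom_pos[OF assms(1,2) that] assms by simp
  show ?thesis
    by (intro continuous_intros cont_rpow) (use assms pos in force)+
qed

lemma int_Bfun:
  fixes a b P Q :: real
  assumes "0 < a" "a < b" "0 \<le> P" "0 \<le> Q"
  shows "((\<lambda>t. rpow t P * rpow (1-t) Q / (b - (b-a)*t)^2) has_integral
          integral {0..1} (\<lambda>t. rpow t P * rpow (1-t) Q / (b - (b-a)*t)^2)) {0..1}"
  by (intro integrable_integral integrable_continuous_interval cont_Bfun assms)

lemma hyp_eval:
  fixes a b P Q :: real
  assumes "0 < a" "a < b" "0 \<le> P" "0 \<le> Q"
  shows "hyp2F1 2 (P + 1) (P + Q + 2) (1 - a/b)
       = b^2 * integral {0..1} (\<lambda>t. rpow t P * rpow (1-t) Q / (b - (b-a)*t)^2) / Beta (P+1) (Q+1)"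
proof -
  have e: "P + 1 - 1 = P" "P + Q + 2 - (P + 1) - 1 = Q" "P + Q + 2 - (P + 1) = Q + 1" by simp_all
  show ?thesis unfolding hyp2F1_def e
    using hyp_int[OF assms] beta_fn_Beta[of "P+1" "Q+1"] assms by simp
qed

lemma bpow: "0 < b \<Longrightarrow> b powr (-2) * b^2 = (1::real)"
  by (simp add: powr_minus)

lemma bpow': "0 < b \<Longrightarrow> b powr (-2) = 1 / (b::real)^2"
  by (simp add: powr_minus divide_inverse)

lemma C1_int:
  fixes a b \<theta> :: real
  assumes "0 < a" "a < b" "0 < \<theta>"
  shows "(wgt \<theta> a b has_integral C1 \<theta> a b) {0..1}"
proof -
  let ?K1 = "integral {0..1} (\<lambda>t. rpow t \<theta> * rpow (1-t) 0 / (b - (b-a)*t)^2)"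
  let ?K2 = "integral {0..1} (\<lambda>t. rpow t 0 * rpow (1-t) \<theta> / (b - (b-a)*t)^2)"
  have h1: "hyp2F1 2 (\<theta> + 1) (\<theta> + 2) (1 - a/b) = b^2 * ?K1 * (\<theta> + 1)"
    using hyp_eval[of a b \<theta> 0] assms Beta_1_right[of "\<theta>+1"] by simp
  have h2: "hyp2F1 2 1 (\<theta> + 2) (1 - a/b) = b^2 * ?K2 * (\<theta> + 1)"
    using hyp_eval[of a b 0 \<theta>] assms Beta_1_left[of "\<theta>+1"] by (simp add: add.commute)
  have "C1 \<theta> a b = (b powr (-2) * b^2) * (?K1 + ?K2)"
    unfolding C1_def h1 h2 using assms by (simp add: field_simps)
  also have "\<dots> = ?K1 + ?K2" using assms bpow by simp
  finally have C: "C1 \<theta> a b = ?K1 + ?K2" .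
  have "((\<lambda>t. rpow t \<theta> * rpow (1-t) 0 / (b - (b-a)*t)^2 + rpow t 0 * rpow (1-t) \<theta> / (b - (b-a)*t)^2)
        has_integral ?K1 + ?K2) {0..1}"
    by (intro has_integral_add int_Bfun) (use assms in auto)
  moreover have "\<And>t. rpow t \<theta> * rpow (1-t) 0 / (b - (b-a)*t)^2 + rpow t 0 * rpow (1-t) \<theta> / (b - (b-a)*t)^2
      = wgt \<theta> a b t"
    using assms by (simp add: wgt_def rpow_pos_eq add_divide_distrib)
  ultimately show ?thesis using C by simp
qed

lemma C2_int:
  fixes a b \<theta> \<alpha> :: real
  assumes "0 < a" "a < b" "0 < \<theta>" "0 \<le> \<alpha>"
  shows "((\<lambda>s. wgt \<theta> a b s * rpow (1-s) \<alpha>) has_integral C2 \<theta> \<alpha> a b) {0..1}"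
proof -
  let ?K3 = "integral {0..1} (\<lambda>t. rpow t \<theta> * rpow (1-t) \<alpha> / (b - (b-a)*t)^2)"
  let ?K4 = "integral {0..1} (\<lambda>t. rpow t 0 * rpow (1-t) (\<theta> + \<alpha>) / (b - (b-a)*t)^2)"
  have Bp: "Beta (\<theta>+1) (\<alpha>+1) > 0" using assms by (intro Beta_pos_real) auto
  have h1: "hyp2F1 2 (\<theta> + 1) (\<theta> + \<alpha> + 2) (1 - a/b) = b^2 * ?K3 / Beta (\<theta>+1) (\<alpha>+1)"
    using hyp_eval[of a b \<theta> \<alpha>] assms by simp
  have h2: "hyp2F1 2 1 (\<theta> + \<alpha> + 2) (1 - a/b) = b^2 * ?K4 * (\<theta> + \<alpha> + 1)"
    using hyp_eval[of a b 0 "\<theta> + \<alpha>"] assms Beta_1_left[of "\<theta>+\<alpha>+1"] by (simp add: add_ac)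
  have C: "C2 \<theta> \<alpha> a b = ?K3 + ?K4"
    unfolding C2_def h1 h2 using assms Bp beta_fn_Beta[of "\<theta>+1" "\<alpha>+1"] by (simp add: bpow')
  have "((\<lambda>t. rpow t \<theta> * rpow (1-t) \<alpha> / (b - (b-a)*t)^2 + rpow t 0 * rpow (1-t) (\<theta> + \<alpha>) / (b - (b-a)*t)^2)
        has_integral ?K3 + ?K4) {0..1}"
    by (intro has_integral_add int_Bfun) (use assms in auto)
  moreover have "rpow t \<theta> * rpow (1-t) \<alpha> / (b - (b-a)*t)^2 + rpow t 0 * rpow (1-t) (\<theta> + \<alpha>) / (b - (b-a)*t)^2
      = wgt \<theta> a b t * rpow (1-t) \<alpha>" for t
  proof (cases "\<alpha> = 0")
    case True thus ?thesis using assms by (simp add: wgt_def rpow_pos_eq add_divide_distrib)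
  next
    case False
    then have "\<alpha> > 0" using assms by simp
    thus ?thesis using assms by (simp add: wgt_def rpow_pos_eq add_divide_distrib powr_add field_simps)
  qed
  ultimately show ?thesis using C by simp
qed

definition uu :: "real \<Rightarrow> real \<Rightarrow> real \<Rightarrow> real" where
  "uu a b s = a * b / (b - (b - a) * s)"

definition du :: "real \<Rightarrow> real \<Rightarrow> real \<Rightarrow> real" where
  "du a b s = a * b * (b - a) / (b - (b - a) * s)^2"

lemma du_nonneg: "0 < a \<Longrightarrow> a < b \<Longrightarrow> du a b s \<ge> 0"
  unfolding du_def by (intro divide_nonneg_nonneg) auto

lemma uu_deriv:
  assumes "0 < a" "a < b" "s \<in> {0..1}"
  shows "(uu a b has_real_derivative du a b s) (at s)"
proof -
  have p: "b - (b - a) * s \<noteq> 0" using denom_pos[OF assms] assms by simp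
  show ?thesis unfolding uu_def du_def
    using p by (auto intro!: derivative_eq_intros simp: power2_eq_square field_simps)
qed

lemma uu_range:
  assumes "0 < a" "a < b" "s \<in> {0..1}"
  shows "uu a b s \<in> {a..b}"
proof -
  have p: "b - (b - a) * s \<ge> a" using denom_pos[OF assms] .
  have q: "b - (b - a) * s \<le> b" using assms by auto
  have "a * b / (b - (b - a) * s) \<ge> a * b / b"
    using p q assms by (intro divide_left_mono) auto
  moreover have "a * b / (b - (b - a) * s) \<le> a * b / a"
    using p q assms by (intro divide_left_mono) auto
  ultimately show ?thesis using assms by (simp add: uu_def)
qed

lemma uu_image:
  assumes "0 < a" "a < b"
  shows "uu a b ` {0..1} = {a..b}"
proof
  show "uu a b ` {0..1} \<subseteq> {a..b}" using uu_range[OF assms] by auto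
  show "{a..b} \<subseteq> uu a b ` {0..1}"
  proof
    fix y assume y: "y \<in> {a..b}"
    define s where "s = (b - a * b / y) / (b - a)"
    have yp: "y > 0" using y assms by auto
    have "a * b / y \<le> b" using y yp assms by (simp add: field_simps)
    moreover have "a * b / y \<ge> a" using y yp assms by (simp add: field_simps)
    ultimately have "s \<in> {0..1}" using assms by (auto simp: s_def field_simps)
    moreover have "uu a b s = y"
    proof -
      have "b - (b - a) * s = a * b / y" using assms by (simp add: s_def)
      thus ?thesis using yp assms by (simp add: uu_def)
    qed
    ultimately show "y \<in> uu a b ` {0..1}" by force
  qed
qed

lemma uu_inj:
  assumes "0 < a" "a < b"
  shows "inj_on (uu a b) {0..1}"
proof
  fix x y assume x: "x \<in> {0..1}" and y: "y \<in> {0..1}" and e: "uu a b x = uu a b y"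
  have px: "b - (b - a) * x > 0" using denom_pos[OF assms x] assms by simp
  have py: "b - (b - a) * y > 0" using denom_pos[OF assms y] assms by simp
  from e have "b - (b - a) * x = b - (b - a) * y"
    using px py assms by (simp add: uu_def field_simps)
  thus "x = y" using assms by simp
qed

lemma subst01:
  fixes g :: "real \<Rightarrow> real"
  assumes "(g has_integral J) {0..1}" "0 < c"
  shows "((\<lambda>x. g ((p - x) / c)) has_integral c * J) {p - c..p}"
proof -
  have "((\<lambda>x. g ((-1/c) *\<^sub>R x + p/c)) has_integral (1 / (\<bar>-1/c\<bar> ^ DIM(real))) *\<^sub>R J)
        ((\<lambda>x. (1 / (-1/c)) *\<^sub>R x + -((1 / (-1/c)) *\<^sub>R (p/c))) ` cbox 0 1)"
    using assms by (intro has_integral_affinity) auto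
  moreover have "(\<lambda>x. (1 / (-1/c)) *\<^sub>R x + -((1 / (-1/c)) *\<^sub>R (p/c))) ` cbox 0 1 = {p - c..p}"
  proof -
    have "(\<lambda>x. (1 / (-1/c)) *\<^sub>R x + -((1 / (-1/c)) *\<^sub>R (p/c))) = (\<lambda>x. (-c) *\<^sub>R x + p)"
      using assms by (auto simp: field_simps)
    moreover have "(\<lambda>x::real. (-c) *\<^sub>R x + p) ` cbox 0 1 = cbox ((-c) *\<^sub>R 1 + p) ((-c) *\<^sub>R 0 + p)"
      using assms by (subst image_affinity_cbox) auto
    ultimately show ?thesis using assms by simp
  qed
  moreover have "(\<lambda>x. g ((-1/c) *\<^sub>R x + p/c)) = (\<lambda>x. g ((p - x) / c))"
    using assms by (auto simp: field_simps)
  ultimately show ?thesis using assms by simp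
qed

lemma D_absint:
  fixes g :: "real \<Rightarrow> real"
  assumes "0 < a" "a < b" "g absolutely_integrable_on {a..b}"
  shows "(\<lambda>s. du a b s * g (uu a b s)) absolutely_integrable_on {0..1}"
proof -
  have "(\<lambda>x. \<bar>du a b x\<bar> * g (uu a b x)) absolutely_integrable_on {0..1} \<and>
        integral {0..1} (\<lambda>x. \<bar>du a b x\<bar> * g (uu a b x)) = integral {a..b} g"
  proof -
    have S: "{0..1::real} \<in> sets lebesgue" by simp
    have D: "(uu a b has_field_derivative du a b x) (at x within {0..1})" if "x \<in> {0..1}" for x
      using uu_deriv[OF assms(1,2) that] by (rule has_field_derivative_at_within)
    have "g absolutely_integrable_on uu a b ` {0..1} \<and> integral (uu a b ` {0..1}) g = integral {a..b} g"
      using assms uu_image[OF assms(1,2)] by simp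
    then show ?thesis
      using has_absolute_integral_change_of_variables_1'[OF S D uu_inj[OF assms(1,2)], of g "integral {a..b} g"]
      by blast
  qed
  moreover have "\<bar>du a b x\<bar> = du a b x" for x using du_nonneg[OF assms(1,2)] by simp
  ultimately show ?thesis by simp
qed

lemma prod_absint:
  fixes h F :: "real \<Rightarrow> real"
  assumes "continuous_on {0..1} h" "F absolutely_integrable_on {0..1}"
  shows "(\<lambda>s. h s * F s) absolutely_integrable_on {0..1}"
  by (intro absolutely_integrable_bounded_measurable_product_real continuous_imp_measurable_on_sets_lebesgue
        assms compact_imp_bounded compact_continuous_image) auto

lemma cont_powr_01:
  fixes \<theta> :: real
  assumes "0 < \<theta>"
  shows "continuous_on {0..1} (\<lambda>s::real. s powr \<theta>)" "continuous_on {0..1} (\<lambda>s::real. (1 - s) powr \<theta>)"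
  by (intro continuous_on_powr' continuous_intros; use assms in auto)+

lemma comp_deriv:
  assumes "0 < a" "a < b" "\<And>x. x \<in> {a..b} \<Longrightarrow> (f has_real_derivative g x) (at x)" "s \<in> {0..1}"
  shows "((\<lambda>s. f (uu a b s)) has_real_derivative g (uu a b s) * du a b s) (at s)"
  by (rule DERIV_chain2[OF assms(3)[OF uu_range[OF assms(1,2,4)]] uu_deriv[OF assms(1,2,4)]])

lemma comp_cont:
  assumes "0 < a" "a < b" "\<And>x. x \<in> {a..b} \<Longrightarrow> (f has_real_derivative g x) (at x)"
  shows "continuous_on {0..1} (\<lambda>s. f (uu a b s))"
  by (rule DERIV_continuous_on, rule has_field_derivative_at_within, rule comp_deriv[OF assms])

lemma uu_0: "0 < a \<Longrightarrow> a < b \<Longrightarrow> uu a b 0 = a" by (simp add: uu_def)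
lemma uu_1: "0 < a \<Longrightarrow> a < b \<Longrightarrow> uu a b 1 = b" by (simp add: uu_def)

lemma FTC_left:
  fixes f g :: "real \<Rightarrow> real"
  assumes ab: "0 < a" "a < b" and th: "0 < \<theta>"
    and der: "\<And>x. x \<in> {a..b} \<Longrightarrow> (f has_real_derivative g x) (at x)"
    and int: "(\<lambda>s. s powr \<theta> * (g (uu a b s) * du a b s)) integrable_on {0..1}"
  shows "((\<lambda>s. \<theta> * s powr (\<theta> - 1) * f (uu a b s)) has_integral
          (f b - integral {0..1} (\<lambda>s. s powr \<theta> * (g (uu a b s) * du a b s)))) {0..1}"
proof -
  let ?H = "\<lambda>s. s powr \<theta> * f (uu a b s)"
  have "((\<lambda>s. \<theta> * s powr (\<theta>-1) * f (uu a b s) + s powr \<theta> * (g (uu a b s) * du a b s))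
         has_integral (?H 1 - ?H 0)) {0..1}"
  proof (rule fundamental_theorem_of_calculus_interior)
    show "0 \<le> (1::real)" by simp
    show "continuous_on {0..1} ?H"
      by (intro continuous_on_mult cont_powr_01 th comp_cont[OF ab der])
    fix s :: real assume s: "s \<in> {0<..<1}"
    have d1: "((\<lambda>s. s powr \<theta>) has_real_derivative \<theta> * s powr (\<theta> - 1)) (at s)"
      using s by (intro has_real_derivative_powr) auto
    note d2 = comp_deriv[OF ab der, of s]
    have "(?H has_real_derivative \<theta> * s powr (\<theta>-1) * f (uu a b s) + s powr \<theta> * (g (uu a b s) * du a b s)) (at s)"
      using DERIV_mult[OF d1 d2] s by (simp add: algebra_simps)
    then show "(?H has_vector_derivative \<theta> * s powr (\<theta>-1) * f (uu a b s) + s powr \<theta> * (g (uu a b s) * du a b s)) (at s)"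
      by (simp add: has_real_derivative_iff_has_vector_derivative)
  qed
  moreover have "?H 1 - ?H 0 = f b" using ab th by (simp add: uu_1)
  ultimately have "((\<lambda>s. \<theta> * s powr (\<theta>-1) * f (uu a b s) + s powr \<theta> * (g (uu a b s) * du a b s))
         has_integral f b) {0..1}" by simp
  from has_integral_diff[OF this integrable_integral[OF int]] show ?thesis by simp
qed

lemma FTC_right:
  fixes f g :: "real \<Rightarrow> real"
  assumes ab: "0 < a" "a < b" and th: "0 < \<theta>"
    and der: "\<And>x. x \<in> {a..b} \<Longrightarrow> (f has_real_derivative g x) (at x)"
    and int: "(\<lambda>s. (1 - s) powr \<theta> * (g (uu a b s) * du a b s)) integrable_on {0..1}"
  shows "((\<lambda>s. \<theta> * (1 - s) powr (\<theta> - 1) * f (uu a b s)) has_integral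
          (f a + integral {0..1} (\<lambda>s. (1 - s) powr \<theta> * (g (uu a b s) * du a b s)))) {0..1}"
proof -
  let ?H = "\<lambda>s. (1 - s) powr \<theta> * f (uu a b s)"
  have "((\<lambda>s. - (\<theta> * (1 - s) powr (\<theta>-1) * f (uu a b s)) + (1 - s) powr \<theta> * (g (uu a b s) * du a b s))
         has_integral (?H 1 - ?H 0)) {0..1}"
  proof (rule fundamental_theorem_of_calculus_interior)
    show "0 \<le> (1::real)" by simp
    show "continuous_on {0..1} ?H"
      by (intro continuous_on_mult cont_powr_01 th comp_cont[OF ab der])
    fix s :: real assume s: "s \<in> {0<..<1}"
    have d0: "((\<lambda>s. 1 - s) has_real_derivative -1) (at s)"
      by (auto intro!: derivative_eq_intros)
    have d1: "((\<lambda>s. (1 - s) powr \<theta>) has_real_derivative \<theta> * (1 - s) powr (\<theta> - 1) * -1) (at s)"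
      using s by (intro DERIV_chain2[OF has_real_derivative_powr d0]) auto
    note d2 = comp_deriv[OF ab der, of s]
    have "(?H has_real_derivative - (\<theta> * (1 - s) powr (\<theta>-1) * f (uu a b s)) + (1 - s) powr \<theta> * (g (uu a b s) * du a b s)) (at s)"
      using DERIV_mult[OF d1 d2] s by (simp add: algebra_simps)
    then show "(?H has_vector_derivative - (\<theta> * (1 - s) powr (\<theta>-1) * f (uu a b s)) + (1 - s) powr \<theta> * (g (uu a b s) * du a b s)) (at s)"
      by (simp add: has_real_derivative_iff_has_vector_derivative)
  qed
  moreover have "?H 1 - ?H 0 = - f a" using ab th by (simp add: uu_0)
  ultimately have "((\<lambda>s. - (\<theta> * (1 - s) powr (\<theta>-1) * f (uu a b s)) + (1 - s) powr \<theta> * (g (uu a b s) * du a b s))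
         has_integral - f a) {0..1}" by simp
  from has_integral_diff[OF integrable_integral[OF int] this] show ?thesis by (simp add: add.commute)
qed

lemma uu_inv:
  assumes "0 < a" "a < b" "0 < x"
  shows "uu a b ((1/a - x) / ((b - a) / (a * b))) = 1 / x"
proof -
  have "b - (b - a) * ((1/a - x) / ((b - a) / (a * b))) = a * b * x"
    using assms by (simp add: field_simps)
  thus ?thesis using assms by (simp add: uu_def)
qed

lemma RL_left_eq:
  fixes f :: "real \<Rightarrow> real"
  assumes ab: "0 < a" "a < b" and th: "0 < \<theta>"
    and J: "((\<lambda>s. s powr (\<theta>-1) * f (uu a b s)) has_integral J) {0..1}"
  shows "RL_left \<theta> (1/b) (\<lambda>x. f (1/x)) (1/a) = ((b-a)/(a*b)) powr \<theta> * J / Gamma \<theta>"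
proof -
  define c where "c = (b-a)/(a*b)"
  have c: "c > 0" using ab by (simp add: c_def)
  have pc: "1/a - c = 1/b" using ab by (simp add: c_def field_simps)
  from subst01[OF J c, of "1/a"]
  have "((\<lambda>x. ((1/a - x)/c) powr (\<theta>-1) * f (uu a b ((1/a - x)/c))) has_integral c * J) {1/b..1/a}"
    by (simp add: pc)
  then have h: "((\<lambda>x. c powr (\<theta>-1) * (((1/a - x)/c) powr (\<theta>-1) * f (uu a b ((1/a - x)/c))))
            has_integral c powr (\<theta>-1) * (c * J)) {1/b..1/a}"
    by (rule has_integral_mult_right)
  have v: "c powr (\<theta>-1) * (c * J) = c powr \<theta> * J" using c by (simp add: powr_diff)
  have "((\<lambda>t. (1/a - t) powr (\<theta>-1) * f (1/t)) has_integral c powr \<theta> * J) {1/b..1/a}"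
  proof (rule has_integral_eq[OF _ h[unfolded v]])
    fix x assume x: "x \<in> {1/b..1/a}"
    then have xp: "x > 0" using ab by (auto intro: less_le_trans[of 0 "1/b"])
    have "c powr (\<theta>-1) * ((1/a - x)/c) powr (\<theta>-1) = (1/a - x) powr (\<theta>-1)"
      using c by (simp add: powr_divide)
    then show "c powr (\<theta>-1) * (((1/a - x)/c) powr (\<theta>-1) * f (uu a b ((1/a - x)/c)))
        = (1/a - x) powr (\<theta>-1) * f (1/x)"
      using uu_inv[OF ab xp] unfolding c_def by simp
  qed
  then show ?thesis unfolding RL_left_def c_def by (simp add: integral_unique)
qed

lemma RL_right_eq:
  fixes f :: "real \<Rightarrow> real"
  assumes ab: "0 < a" "a < b" and th: "0 < \<theta>"
    and J: "((\<lambda>s. (1 - s) powr (\<theta>-1) * f (uu a b s)) has_integral J) {0..1}"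
  shows "RL_right \<theta> (1/a) (\<lambda>x. f (1/x)) (1/b) = ((b-a)/(a*b)) powr \<theta> * J / Gamma \<theta>"
proof -
  define c where "c = (b-a)/(a*b)"
  have c: "c > 0" using ab by (simp add: c_def)
  have pc: "1/a - c = 1/b" using ab by (simp add: c_def field_simps)
  from subst01[OF J c, of "1/a"]
  have "((\<lambda>x. (1 - (1/a - x)/c) powr (\<theta>-1) * f (uu a b ((1/a - x)/c))) has_integral c * J) {1/b..1/a}"
    by (simp add: pc)
  then have h: "((\<lambda>x. c powr (\<theta>-1) * ((1 - (1/a - x)/c) powr (\<theta>-1) * f (uu a b ((1/a - x)/c))))
            has_integral c powr (\<theta>-1) * (c * J)) {1/b..1/a}"
    by (rule has_integral_mult_right)
  have v: "c powr (\<theta>-1) * (c * J) = c powr \<theta> * J" using c by (simp add: powr_diff)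
  have "((\<lambda>t. (t - 1/b) powr (\<theta>-1) * f (1/t)) has_integral c powr \<theta> * J) {1/b..1/a}"
  proof (rule has_integral_eq[OF _ h[unfolded v]])
    fix x assume x: "x \<in> {1/b..1/a}"
    then have xp: "x > 0" using ab by (auto intro: less_le_trans[of 0 "1/b"])
    have e: "1 - (1/a - x)/c = (x - 1/b) / c" using c pc by (simp add: field_simps)
    have "c powr (\<theta>-1) * ((x - 1/b)/c) powr (\<theta>-1) = (x - 1/b) powr (\<theta>-1)"
      using c by (simp add: powr_divide)
    then show "c powr (\<theta>-1) * ((1 - (1/a - x)/c) powr (\<theta>-1) * f (uu a b ((1/a - x)/c)))
        = (x - 1/b) powr (\<theta>-1) * f (1/x)"
      using uu_inv[OF ab xp] unfolding e unfolding c_def by simp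
  qed
  then show ?thesis unfolding RL_right_def c_def by (simp add: integral_unique)
qed

lemma I_f_identity:
  fixes f g :: "real \<Rightarrow> real"
  assumes ab: "0 < a" "a < b" and th: "0 < \<theta>"
    and der: "\<And>x. x \<in> {a..b} \<Longrightarrow> (f has_real_derivative g x) (at x)"
    and int1: "(\<lambda>s. s powr \<theta> * (g (uu a b s) * du a b s)) integrable_on {0..1}"
    and int2: "(\<lambda>s. (1 - s) powr \<theta> * (g (uu a b s) * du a b s)) integrable_on {0..1}"
  shows "I_f f \<theta> a b = (integral {0..1} (\<lambda>s. s powr \<theta> * (g (uu a b s) * du a b s))
                      - integral {0..1} (\<lambda>s. (1 - s) powr \<theta> * (g (uu a b s) * du a b s))) / 2"
proof -
  define X1 where "X1 = integral {0..1} (\<lambda>s. s powr \<theta> * (g (uu a b s) * du a b s))"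
  define X2 where "X2 = integral {0..1} (\<lambda>s. (1 - s) powr \<theta> * (g (uu a b s) * du a b s))"
  define c where "c = (b-a)/(a*b)"
  have c: "c > 0" using ab by (simp add: c_def)
  have L: "((\<lambda>s. s powr (\<theta>-1) * f (uu a b s)) has_integral (f b - X1) / \<theta>) {0..1}"
  proof -
    from has_integral_mult_right[OF FTC_left[OF ab th der int1], of "1/\<theta>"]
    show ?thesis using th unfolding X1_def by (simp add: field_simps)
  qed
  have R: "((\<lambda>s. (1 - s) powr (\<theta>-1) * f (uu a b s)) has_integral (f a + X2) / \<theta>) {0..1}"
  proof -
    from has_integral_mult_right[OF FTC_right[OF ab th der int2], of "1/\<theta>"]
    show ?thesis using th unfolding X2_def by (simp add: field_simps)
  qed
  have G: "Gamma (\<theta> + 1) = \<theta> * Gamma \<theta>"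
    using th by (intro Gamma_plus1) (auto simp: nonpos_Ints_def)
  have Gp: "Gamma \<theta> > 0" using th by simp
  have ip: "(a * b / (b - a)) powr \<theta> = 1 / c powr \<theta>"
    using ab by (simp add: c_def powr_divide)
  have cp: "c powr \<theta> > 0" using c by simp
  have alg: "\<And>G C. G \<noteq> 0 \<Longrightarrow> C \<noteq> 0 \<Longrightarrow>
     (f a + f b) / 2 - \<theta> * G / 2 * (1 / C) * (C * ((f a + X2) / \<theta>) / G + C * ((f b - X1) / \<theta>) / G)
      = (X1 - X2) / 2"
    using th by (simp add: field_simps)
  have Gn: "Gamma \<theta> \<noteq> 0" using Gp by linarith
  have cn: "c powr \<theta> \<noteq> 0" using cp by linarith
  show ?thesis
    unfolding I_f_def RL_left_eq[OF ab th L] RL_right_eq[OF ab th R] G ip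
    unfolding X1_def[symmetric] X2_def[symmetric] c_def[symmetric]
    by (rule alg[OF Gn cn])
qed

lemma wgt_nonneg: "0 < a \<Longrightarrow> a < b \<Longrightarrow> wgt \<theta> a b s \<ge> 0"
  unfolding wgt_def by (intro divide_nonneg_nonneg) auto

lemma C1_pos:
  fixes a b \<theta> :: real
  assumes "0 < a" "a < b" "0 < \<theta>"
  shows "C1 \<theta> a b > 0"
proof -
  let ?k = "(1/2) powr \<theta> / b^2"
  have "((\<lambda>s::real. ?k) has_integral ?k) {0..1::real}"
    using has_integral_const_real[of ?k 0 1] by simp
  moreover have "?k \<le> wgt \<theta> a b s" if s: "s \<in> {0..1}" for s
  proof -
    have "(1/2) powr \<theta> \<le> s powr \<theta> + (1 - s) powr \<theta>"
    proof (cases "s \<ge> 1/2")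
      case True
      then have "(1/2) powr \<theta> \<le> s powr \<theta>" using assms by (intro powr_mono2) auto
      thus ?thesis by (smt (verit) powr_ge_zero)
    next
      case False
      then have "(1/2) powr \<theta> \<le> (1 - s) powr \<theta>" using assms by (intro powr_mono2) auto
      thus ?thesis by (smt (verit) powr_ge_zero)
    qed
    moreover have "0 < b - (b - a) * s" "b - (b - a) * s \<le> b"
      using denom_pos[OF assms(1,2) s] s assms by auto
    then have "(b - (b - a) * s)^2 \<le> b^2" "0 < (b - (b - a) * s)^2" by (auto intro: power_mono)
    ultimately have "(1/2) powr \<theta> / b^2 \<le> (s powr \<theta> + (1 - s) powr \<theta>) / b^2"
      using assms by (intro divide_right_mono) auto
    also have "\<dots> \<le> (s powr \<theta> + (1 - s) powr \<theta>) / (b - (b - a) * s)^2"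
      using \<open>(b - (b - a) * s)^2 \<le> b^2\<close> \<open>0 < (b - (b - a) * s)^2\<close> assms
      by (intro divide_left_mono) (auto intro!: mult_pos_pos)
    finally show ?thesis unfolding wgt_def .
  qed
  ultimately have "?k \<le> C1 \<theta> a b"
    by (intro has_integral_le[OF _ C1_int[OF assms]]) auto
  moreover have "?k > 0" using assms by simp
  ultimately show ?thesis by linarith
qed

theorem theorem5:
  fixes f :: "real \<Rightarrow> real" and I :: "real set"
    and m \<alpha> q \<theta> a b :: real
  assumes "is_interval I" and "I \<subseteq> {0<..}"
    and "\<forall>x\<in>interior I. f differentiable (at x)"
    and "0 < m" and "m \<le> 1" and "0 \<le> \<alpha>" and "\<alpha> \<le> 1" and "1 \<le> q" and "0 < \<theta>"
    and "a < b" and "a \<in> interior I" and "b / m \<in> interior I"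
    and "deriv f absolutely_integrable_on {a..b}"
    and "harm_alpha_m_convex_on {a..b/m} \<alpha> m (\<lambda>x. \<bar>deriv f x\<bar> powr q)"
  shows "\<bar>I_f f \<theta> a b\<bar> \<le> a * b * (b - a) / 2 * C1 \<theta> a b powr (1 - 1/q)
           * (C2 \<theta> \<alpha> a b * \<bar>deriv f a\<bar> powr q + m * C3 \<theta> \<alpha> a b * \<bar>deriv f (b/m)\<bar> powr q) powr (1/q)"
proof -
  note asm = assms
  define g where "g = deriv f"
  have a0: "0 < a" using assms(2,11) interior_subset by fastforce
  have ab: "0 < a" "a < b" using a0 assms by auto
  have bbm: "b \<le> b / m" using assms ab by (simp add: field_simps)
  have sub: "{a..b/m} \<subseteq> interior I"
  proof -
    have "convex (interior I)" using assms(1) by (intro convex_interior is_interval_convex)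
    then have "closed_segment a (b/m) \<subseteq> interior I"
      using assms(11,12) unfolding convex_contains_segment by blast
    thus ?thesis using closed_segment_eq_real_ivl1[of a "b/m"] bbm ab by simp
  qed
  have der: "(f has_real_derivative g x) (at x)" if x: "x \<in> {a..b}" for x
  proof -
    have "x \<in> interior I" using sub bbm x by auto
    then have "f differentiable (at x)" using assms(3) by blast
    then show ?thesis unfolding g_def using DERIV_deriv_iff_real_differentiable by blast
  qed
  let ?D = "\<lambda>s. g (uu a b s) * du a b s"
  have Dabs: "?D absolutely_integrable_on {0..1}"
  proof -
    have "(\<lambda>s. du a b s * g (uu a b s)) absolutely_integrable_on {0..1}"
      using D_absint[OF ab] assms(13) unfolding g_def by blast
    moreover have "(\<lambda>s. du a b s * g (uu a b s)) = ?D" by (simp add: mult.commute)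
    ultimately show ?thesis by simp
  qed
  have abs1: "(\<lambda>s. s powr \<theta> * ?D s) absolutely_integrable_on {0..1}"
    by (rule prod_absint[OF cont_powr_01(1)[OF assms(9)] Dabs])
  have abs2: "(\<lambda>s. (1 - s) powr \<theta> * ?D s) absolutely_integrable_on {0..1}"
    by (rule prod_absint[OF cont_powr_01(2)[OF assms(9)] Dabs])
  have int1: "(\<lambda>s. s powr \<theta> * ?D s) integrable_on {0..1}"
    by (rule conjunct1[OF abs1[unfolded absolutely_integrable_on_def]])
  have int2: "(\<lambda>s. (1 - s) powr \<theta> * ?D s) integrable_on {0..1}"
    by (rule conjunct1[OF abs2[unfolded absolutely_integrable_on_def]])
  have ident: "I_f f \<theta> a b = integral {0..1} (\<lambda>s. (s powr \<theta> - (1 - s) powr \<theta>) * ?D s) / 2"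
    using I_f_identity[OF ab assms(9) der int1 int2] integral_diff[OF int1 int2]
    by (simp add: left_diff_distrib)
  let ?ws = "\<lambda>s. s powr \<theta> + (1 - s) powr \<theta>"
  have absw: "(\<lambda>s. ?ws s * ?D s) absolutely_integrable_on {0..1}"
    by (rule prod_absint[OF continuous_on_add[OF cont_powr_01(1)[OF assms(9)] cont_powr_01(2)[OF assms(9)]] Dabs])
  have intY: "(\<lambda>s. ?ws s * \<bar>?D s\<bar>) integrable_on {0..1}"
  proof -
    have "(\<lambda>s. norm (?ws s * ?D s)) integrable_on {0..1}"
      by (rule conjunct2[OF absw[unfolded absolutely_integrable_on_def]])
    moreover have "norm (?ws s * ?D s) = ?ws s * \<bar>?D s\<bar>" for s
      by (simp add: abs_mult)
    ultimately show ?thesis by simp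
  qed
  define Y where "Y = integral {0..1} (\<lambda>s. ?ws s * \<bar>?D s\<bar>)"
  have intdiff: "(\<lambda>s. (s powr \<theta> - (1 - s) powr \<theta>) * ?D s) integrable_on {0..1}"
    using integrable_diff[OF int1 int2] by (simp add: left_diff_distrib)
  have IY: "\<bar>I_f f \<theta> a b\<bar> \<le> Y / 2"
  proof -
    have "norm (integral {0..1} (\<lambda>s. (s powr \<theta> - (1 - s) powr \<theta>) * ?D s)) \<le> Y"
      unfolding Y_def
    proof (rule integral_norm_bound_integral[OF intdiff intY])
      fix s :: real assume "s \<in> {0..1}"
      have p1: "0 \<le> s powr \<theta>" and p2: "0 \<le> (1 - s) powr \<theta>" by simp_all
      have "\<bar>s powr \<theta> - (1 - s) powr \<theta>\<bar> \<le> ?ws s" using p1 p2 by (simp add: abs_le_iff)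
      then show "norm ((s powr \<theta> - (1 - s) powr \<theta>) * ?D s) \<le> ?ws s * \<bar>?D s\<bar>"
        by (simp add: abs_mult mult_right_mono)
    qed
    thus ?thesis using ident by simp
  qed
  define A where "A = \<bar>g a\<bar> powr q"
  define Bm where "Bm = \<bar>g (b/m)\<bar> powr q"
  define K where "K = a * b * (b - a)"
  define W where "W = C1 \<theta> a b"
  define M where "M = C2 \<theta> \<alpha> a b * A + m * C3 \<theta> \<alpha> a b * Bm"
  let ?r = "\<lambda>s. rpow (1 - s) \<alpha>"
  have K: "K > 0" using ab by (simp add: K_def)
  have W: "W > 0" unfolding W_def by (rule C1_pos[OF ab assms(9)])
  have C2n: "C2 \<theta> \<alpha> a b \<ge> 0"
    by (rule has_integral_nonneg[OF C2_int[OF ab assms(9,6)]])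
       (auto intro!: mult_nonneg_nonneg wgt_nonneg ab rpow_nonneg)
  have C3n: "C3 \<theta> \<alpha> a b \<ge> 0"
  proof -
    have "C2 \<theta> \<alpha> a b \<le> C1 \<theta> a b"
    proof (rule has_integral_le[OF C2_int[OF ab assms(9,6)] C1_int[OF ab assms(9)]])
      fix s :: real assume "s \<in> {0..1}"
      then have "?r s \<le> 1" using assms by (intro rpow_le1) auto
      then show "wgt \<theta> a b s * ?r s \<le> wgt \<theta> a b s"
        using wgt_nonneg[OF ab] by (simp add: mult_left_le)
    qed
    thus ?thesis by (simp add: C3_def)
  qed
  have Mn: "M \<ge> 0" unfolding M_def A_def Bm_def using C2n C3n assms by simp
  have conv: "\<bar>g (uu a b s)\<bar> powr q \<le> ?r s * A + m * (1 - ?r s) * Bm" if s: "s \<in> {0..1}" for s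
  proof -
    have e: "m * a * (b/m) / (m * (1 - s) * (b/m) + (1 - (1 - s)) * a) = uu a b s"
    proof -
      have n: "m * a * (b/m) = a * b" using assms by simp
      have d: "m * (1 - s) * (b/m) + (1 - (1 - s)) * a = b - (b - a) * s"
        using assms by (simp add: algebra_simps)
      show ?thesis unfolding n d uu_def ..
    qed
    have mem: "uu a b s \<in> {a..b/m}" using uu_range[OF ab s] bbm by auto
    have m1: "a \<in> {a..b/m}" and m2: "b/m \<in> {a..b/m}" and m3: "1 - s \<in> {0..1}"
      using ab bbm s by auto
    note H = assms(14)[unfolded harm_alpha_m_convex_on_def, rule_format]
    from H[OF m1 m2 m3, unfolded e, OF mem] show ?thesis unfolding A_def Bm_def g_def .
  qed
  have bound: "Y \<le> K * ((1 - 1/q) * c * W + (1/q) * c powr (1 - q) * M)" if c: "c > 0" for c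
  proof -
    define k1 where "k1 = K * ((1 - 1/q) * c + (1/q) * c powr (1 - q) * m * Bm)"
    define k2 where "k2 = K * ((1/q) * c powr (1 - q) * (A - m * Bm))"
    have hi: "((\<lambda>s. k1 * wgt \<theta> a b s + k2 * (wgt \<theta> a b s * ?r s)) has_integral
               k1 * C1 \<theta> a b + k2 * C2 \<theta> \<alpha> a b) {0..1}"
      by (intro has_integral_add has_integral_mult_right C1_int C2_int ab assms)
    have "Y \<le> k1 * C1 \<theta> a b + k2 * C2 \<theta> \<alpha> a b"
      unfolding Y_def
    proof (rule has_integral_le[OF integrable_integral[OF intY] hi])
      fix s :: real assume s: "s \<in> {0..1}"
      have y: "\<bar>g (uu a b s)\<bar> \<le> (1 - 1/q) * c + (1/q) * c powr (1 - q) * \<bar>g (uu a b s)\<bar> powr q"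
        using young_pt[of "\<bar>g (uu a b s)\<bar>" c q] c assms by simp
      also have "\<dots> \<le> (1 - 1/q) * c + (1/q) * c powr (1 - q) * (?r s * A + m * (1 - ?r s) * Bm)"
        using conv[OF s] assms by (intro add_left_mono mult_left_mono) auto
      finally have y2: "\<bar>g (uu a b s)\<bar> \<le> (1 - 1/q) * c + (1/q) * c powr (1 - q) * (?r s * A + m * (1 - ?r s) * Bm)" .
      have ww: "?ws s * du a b s = K * wgt \<theta> a b s"
        unfolding wgt_def du_def K_def by (simp add: field_simps)
      have "?ws s * \<bar>?D s\<bar> = (?ws s * du a b s) * \<bar>g (uu a b s)\<bar>"
        using du_nonneg[OF ab, of s] by (simp add: abs_mult)
      also have "\<dots> = K * wgt \<theta> a b s * \<bar>g (uu a b s)\<bar>" using ww by simp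
      also have "\<dots> \<le> K * wgt \<theta> a b s * ((1 - 1/q) * c + (1/q) * c powr (1 - q) * (?r s * A + m * (1 - ?r s) * Bm))"
        using y2 K wgt_nonneg[OF ab] by (intro mult_left_mono) auto
      also have "\<dots> = k1 * wgt \<theta> a b s + k2 * (wgt \<theta> a b s * ?r s)"
        unfolding k1_def k2_def by (simp add: algebra_simps diff_divide_distrib add_divide_distrib)
      finally show "?ws s * \<bar>?D s\<bar> \<le> k1 * wgt \<theta> a b s + k2 * (wgt \<theta> a b s * ?r s)" .
    qed
    also have "k1 * C1 \<theta> a b + k2 * C2 \<theta> \<alpha> a b = K * ((1 - 1/q) * c * W + (1/q) * c powr (1 - q) * M)"
      unfolding k1_def k2_def W_def M_def C3_def by (simp add: algebra_simps diff_divide_distrib add_divide_distrib)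
    finally show ?thesis .
  qed
  have "Y \<le> K * (W powr (1 - 1/q) * M powr (1/q))"
    by (rule final_alg[OF K W Mn assms(8) bound])
  then have "\<bar>I_f f \<theta> a b\<bar> \<le> K * (W powr (1 - 1/q) * M powr (1/q)) / 2" using IY by simp
  thus ?thesis unfolding K_def W_def M_def A_def Bm_def g_def by (simp add: algebra_simps)
qed

end
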